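(* Let $R$ be a commutative elementary divisor domain and let $E=\mathrm{diag}(\varepsilon_1,\dots,\varepsilon_k,0,\dots,0)$ and $\Phi=\mathrm{diag}(\varphi_1,\dots,\varphi_t,0,\dots,0)$ be $n\times n$ $d$-matrices with $\varepsilon_k\ne0$, $\varphi_t\ne0$. If $\Phi\mid E$ (i.e. $k\le t$ and $\varphi_i\mid\varepsilon_i$ for $i=1,\dots,k$), then $\mathbf L(E,\Phi)$ consists exactly of the invertible $n\times n$ matrices $L=(l_{ij})$ such that $\frac{\varphi_i}{(\varphi_i,\varepsilon_j)}\mid l_{ij}$ for all $1\le i\le t$, $1\le j\le k$, and $l_{ij}=0$ for all $t<i\le n$, $1\le j\le k$ (entries in columns $k+1,\dots,n$ are unrestricted). If $\Phi\nmid E$, then $\mathbf L(E,\Phi)=\emptyset$.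
   Context: Elementary divisor domain: commutative integral domain over which every matrix is equivalent to a $d$-matrix, i.e. a diagonal matrix $\mathrm{diag}(\varphi_1,\dots)$ with $\varphi_i\mid\varphi_{i+1}$. For $n\times n$ $d$-matrices $E,\Phi$, the generating set is $\mathbf L(E,\Phi)=\{L\in GL_n(R):\ \exists S\in M_n(R),\ LE=\Phi S\}$. *)

theory Defs
  imports "Jordan_Normal_Form.Matrix"
begin

definition d_matrix :: "'a::comm_ring_1 mat \<Rightarrow> bool" where
  "d_matrix D \<longleftrightarrow>
     (\<forall>i j. i < dim_row D \<and> j < dim_col D \<and> i \<noteq> j \<longrightarrow> D $$ (i, j) = 0) \<and>
     (\<forall>i. Suc i < min (dim_row D) (dim_col D) \<longrightarrow> D $$ (i, i) dvd D $$ (Suc i, Suc i))"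

definition elementary_divisor_domain :: "'a::idom itself \<Rightarrow> bool" where
  "elementary_divisor_domain _ \<longleftrightarrow>
     (\<forall>m n (A :: 'a mat). A \<in> carrier_mat m n \<longrightarrow>
        (\<exists>P Q. P \<in> carrier_mat m m \<and> Q \<in> carrier_mat n n \<and>
               invertible_mat P \<and> invertible_mat Q \<and> d_matrix (P * A * Q)))"

definition is_gcd :: "'a::comm_ring_1 \<Rightarrow> 'a \<Rightarrow> 'a \<Rightarrow> bool" where
  "is_gcd d a b \<longleftrightarrow> d dvd a \<and> d dvd b \<and> (\<forall>c. c dvd a \<and> c dvd b \<longrightarrow> c dvd d)"

(* the n x n matrix diag(x_0, ..., x_{r-1}, 0, ..., 0)  (0-based indices) *)
definition dmat :: "nat \<Rightarrow> nat \<Rightarrow> (nat \<Rightarrow> 'a::zero) \<Rightarrow> 'a mat" where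
  "dmat n r x = mat n n (\<lambda>(i, j). if i = j \<and> i < r then x i else 0)"

definition Lset :: "nat \<Rightarrow> 'a::comm_ring_1 mat \<Rightarrow> 'a mat \<Rightarrow> 'a mat set" where
  "Lset n E Phi = {L \<in> carrier_mat n n. invertible_mat L \<and>
                     (\<exists>S \<in> carrier_mat n n. L * E = Phi * S)}"

end

theory Submission imports Defs "Jordan_Normal_Form.Determinant" begin

lemma mult_entry: "A \<in> carrier_mat m p \<Longrightarrow> B \<in> carrier_mat p q \<Longrightarrow> i < m \<Longrightarrow> j < q \<Longrightarrow>
  (A * B) $$ (i, j) = (\<Sum>l<p. A $$ (i, l) * B $$ (l, j))"
  by (simp add: scalar_prod_def atLeast0LessThan)

lemma mult_dmat_right:
  assumes L: "L \<in> carrier_mat n n" and i: "i < n" and j: "j < n"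
  shows "(L * dmat n k x) $$ (i, j) = L $$ (i, j) * (if j < k then x j else 0)"
proof -
  have "(L * dmat n k x) $$ (i, j) = (\<Sum>l<n. L $$ (i, l) * dmat n k x $$ (l, j))"
    using assms by (intro mult_entry) (auto simp: dmat_def)
  also have "\<dots> = (\<Sum>l<n. if l = j then L $$ (i, j) * (if j < k then x j else 0) else 0)"
    using j by (intro sum.cong) (auto simp: dmat_def)
  also have "\<dots> = L $$ (i, j) * (if j < k then x j else 0)" using j by simp
  finally show ?thesis .
qed

lemma mult_dmat_left:
  assumes S: "S \<in> carrier_mat n n" and i: "i < n" and j: "j < n"
  shows "(dmat n t x * S) $$ (i, j) = (if i < t then x i else 0) * S $$ (i, j)"
proof -
  have "(dmat n t x * S) $$ (i, j) = (\<Sum>l<n. dmat n t x $$ (i, l) * S $$ (l, j))"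
    using assms by (intro mult_entry) (auto simp: dmat_def)
  also have "\<dots> = (\<Sum>l<n. if l = i then (if i < t then x i else 0) * S $$ (i, j) else 0)"
    using i by (intro sum.cong) (auto simp: dmat_def)
  also have "\<dots> = (if i < t then x i else 0) * S $$ (i, j)" using i by simp
  finally show ?thesis .
qed

lemma dmat_chain:
  assumes d: "d_matrix (dmat n k x)" and k: "k \<le> n" and ij: "i \<le> j" "j < k"
  shows "x i dvd x j"
  using ij
proof (induction j)
  case 0 then show ?case by simp
next
  case (Suc j)
  have "dmat n k x $$ (j, j) dvd dmat n k x $$ (Suc j, Suc j)"
    using d Suc.prems k unfolding d_matrix_def by (auto simp: dmat_def simp del: index_mat)
  then have "x j dvd x (Suc j)" using Suc.prems k by (simp add: dmat_def)
  then show ?case using Suc by (cases "i = Suc j") (auto intro: dvd_trans)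
qed

lemma prod_cong_dvd:
  fixes c e :: "'a::comm_ring_1"
  assumes "finite A" "\<forall>i\<in>A. c dvd (f i - g i) * e"
  shows "c dvd (prod f A - prod g A) * e"
  using assms
proof (induction A rule: finite_induct)
  case empty then show ?case by simp
next
  case (insert a A)
  have eq: "(prod f (insert a A) - prod g (insert a A)) * e
      = ((f a - g a) * e) * prod f A + g a * ((prod f A - prod g A) * e)"
    using insert.hyps by (simp add: algebra_simps)
  have 1: "c dvd ((f a - g a) * e) * prod f A" by (rule dvd_mult2) (use insert in auto)
  have 2: "c dvd g a * ((prod f A - prod g A) * e)" by (rule dvd_mult) (use insert in auto)
  show ?case unfolding eq using 1 2 by (rule dvd_add)
qed

lemma det_cong_dvd:
  fixes c e :: "'a::comm_ring_1"
  assumes X: "X \<in> carrier_mat b b" and Y: "Y \<in> carrier_mat b b"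
    and h: "\<forall>i j. i < b \<longrightarrow> j < b \<longrightarrow> c dvd (X $$ (i, j) - Y $$ (i, j)) * e"
  shows "c dvd (det X - det Y) * e"
proof -
  have "(det X - det Y) * e = (\<Sum>p\<in>{p. p permutes {0..<b}}.
      signof p * ((prod (\<lambda>i. X $$ (i, p i)) {0..<b} - prod (\<lambda>i. Y $$ (i, p i)) {0..<b}) * e))"
  proof -
    have dd: "det X - det Y = (\<Sum>p\<in>{p. p permutes {0..<b}}.
      signof p * (prod (\<lambda>i. X $$ (i, p i)) {0..<b} - prod (\<lambda>i. Y $$ (i, p i)) {0..<b}))"
      unfolding det_def'[OF X] det_def'[OF Y] by (simp add: sum_subtractf right_diff_distrib)
    show "(det X - det Y) * e = (\<Sum>p\<in>{p. p permutes {0..<b}}.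
      signof p * ((prod (\<lambda>i. X $$ (i, p i)) {0..<b} - prod (\<lambda>i. Y $$ (i, p i)) {0..<b}) * e))"
      unfolding dd by (simp add: sum_distrib_right mult.assoc)
  qed
  also have "c dvd \<dots>"
  proof (rule dvd_sum)
    fix p assume p: "p \<in> {p. p permutes {0..<b}}"
    have "c dvd (prod (\<lambda>i. X $$ (i, p i)) {0..<b} - prod (\<lambda>i. Y $$ (i, p i)) {0..<b}) * e"
    proof (rule prod_cong_dvd, simp, rule ballI)
      fix i assume i: "i \<in> {0..<b}"
      then have "p i < b" using p by (auto dest: permutes_in_image)
      then show "c dvd (X $$ (i, p i) - Y $$ (i, p i)) * e" using h i by auto
    qed
    then show "c dvd signof p * ((prod (\<lambda>i. X $$ (i, p i)) {0..<b} - prod (\<lambda>i. Y $$ (i, p i)) {0..<b}) * e)"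
      by (rule dvd_mult)
  qed
  finally show ?thesis .
qed

lemma key_block:
  fixes c e :: "'a::comm_ring_1"
  assumes L: "L \<in> carrier_mat n n" and M: "M \<in> carrier_mat n n" and MLi: "M * L = 1\<^sub>m n"
    and ab: "a < b" "b \<le> n"
    and h: "\<forall>r j. a \<le> r \<longrightarrow> r < n \<longrightarrow> j < b \<longrightarrow> c dvd L $$ (r, j) * e"
  shows "c dvd e"
proof -
  define A' where "A' = mat b b (\<lambda>(j, r). if r < a then M $$ (j, r) else 0)"
  define B' where "B' = mat b b (\<lambda>(r, j). if r < a then L $$ (r, j) else 0)"
  define X where "X = A' * B'"
  have A'c: "A' \<in> carrier_mat b b" and B'c: "B' \<in> carrier_mat b b" and Xc: "X \<in> carrier_mat b b"
    by (auto simp: A'_def B'_def X_def)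
  have "det A' = 0"
    unfolding det_def'[OF A'c]
  proof (intro sum.neutral ballI)
    fix p assume "p \<in> {p. p permutes {0..<b}}"
    then have p: "p permutes {0..<b}" by simp
    obtain i where pi: "p i = a" using p unfolding permutes_def by metis
    have "i < b"
    proof (rule ccontr)
      assume "\<not> i < b" then have "p i = i" using p unfolding permutes_def by auto
      then show False using pi ab \<open>\<not> i < b\<close> by simp
    qed
    then have "\<exists>i\<in>{0..<b}. A' $$ (i, p i) = 0" using pi ab by (intro bexI[of _ i]) (auto simp: A'_def)
    then show "signof p * (\<Prod>i = 0..<b. A' $$ (i, p i)) = 0" by (simp add: prod_zero)
  qed
  then have detX: "det X = 0" unfolding X_def det_mult[OF A'c B'c] by simp
  have "c dvd (det X - det (1\<^sub>m b)) * e"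
  proof (intro det_cong_dvd[OF Xc] allI impI)
    fix j j' assume j: "j < b" and j': "j' < b"
    have "X $$ (j, j') = (\<Sum>r<b. A' $$ (j, r) * B' $$ (r, j'))"
      unfolding X_def using j j' A'c B'c by (intro mult_entry) auto
    also have "\<dots> = (\<Sum>r<b. if r < a then M $$ (j, r) * L $$ (r, j') else 0)"
      using j j' by (intro sum.cong) (auto simp: A'_def B'_def)
    also have "\<dots> = (\<Sum>r<a. M $$ (j, r) * L $$ (r, j'))"
    proof -
      have "{..<b} \<inter> {r. r<a} = {..<a}" using ab by auto
      then show ?thesis by (simp add: sum.If_cases)
    qed
    finally have Xe: "X $$ (j, j') = (\<Sum>r<a. M $$ (j, r) * L $$ (r, j'))" .
    have "(M * L) $$ (j, j') = (\<Sum>r<n. M $$ (j, r) * L $$ (r, j'))"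
      using j j' ab by (intro mult_entry[OF M L]) auto
    also have "\<dots> = (\<Sum>r<a. M $$ (j, r) * L $$ (r, j')) + (\<Sum>r\<in>{a..<n}. M $$ (j, r) * L $$ (r, j'))"
      using ab by (simp add: atLeast0LessThan[symmetric] sum.atLeastLessThan_concat)
    finally have "X $$ (j, j') - 1\<^sub>m b $$ (j, j') = - (\<Sum>r\<in>{a..<n}. M $$ (j, r) * L $$ (r, j'))"
      using MLi j j' ab Xe by auto
    moreover have "c dvd (\<Sum>r\<in>{a..<n}. M $$ (j, r) * L $$ (r, j')) * e"
      unfolding sum_distrib_right using h j' by (intro dvd_sum) (auto simp: mult.assoc intro: dvd_mult)
    ultimately show "c dvd (X $$ (j, j') - 1\<^sub>m b $$ (j, j')) * e" by simp
  qed auto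
  then show ?thesis using detX by simp
qed

lemma inv_carrier:
  assumes "P \<in> carrier_mat m m" "invertible_mat P"
  shows "\<exists>P'. P' \<in> carrier_mat m m \<and> P' * P = 1\<^sub>m m \<and> P * P' = 1\<^sub>m m"
proof -
  obtain P' where a: "P * P' = 1\<^sub>m (dim_row P)" and b: "P' * P = 1\<^sub>m (dim_row P')"
    using assms unfolding invertible_mat_def inverts_mat_def by blast
  have "dim_col P' = m" using a assms by (metis carrier_matD index_mult_mat(3) index_one_mat(3))
  moreover have "dim_row P' = m" using b assms by (metis carrier_matD(2) index_mult_mat(3) index_one_mat(3))
  ultimately show ?thesis using a b assms by auto
qed

lemma bezout_edd:
  fixes a b :: "'a::idom"
  assumes edd: "elementary_divisor_domain TYPE('a)"
  shows "\<exists>d x y. d dvd a \<and> d dvd b \<and> d = x * a + y * b"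
proof -
  define A where "A = mat 1 2 (\<lambda>(i, j). if j = 0 then a else b)"
  have Ac: "A \<in> carrier_mat 1 2" by (simp add: A_def)
  obtain P Q where P: "P \<in> carrier_mat 1 1" and Q: "Q \<in> carrier_mat 2 2"
    and Pi: "invertible_mat P" and Qi: "invertible_mat Q" and dm: "d_matrix (P * A * Q)"
    using edd Ac unfolding elementary_divisor_domain_def by blast
  define D where "D = P * A * Q"
  have Dc: "D \<in> carrier_mat 1 2" using P Q Ac by (simp add: D_def)
  have D01: "D $$ (0, 1) = 0" using dm Dc unfolding D_def[symmetric] d_matrix_def by auto
  obtain P' where P': "P' \<in> carrier_mat 1 1" "P' * P = 1\<^sub>m 1" using inv_carrier[OF P Pi] by blast
  obtain Q' where Q': "Q' \<in> carrier_mat 2 2" "Q * Q' = 1\<^sub>m 2" using inv_carrier[OF Q Qi] by blast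
  have PAc: "P * A \<in> carrier_mat 1 2" using P Ac by simp
  have "P * A * Q * Q' = P * A * (Q * Q')" using assoc_mult_mat[OF PAc Q Q'(1)] .
  also have "\<dots> = P * A" using PAc Q' by (simp add: right_mult_one_mat[OF PAc])
  finally have e1: "D * Q' = P * A" unfolding D_def .
  have "P' * D * Q' = P' * (D * Q')" using assoc_mult_mat[OF P'(1) Dc Q'(1)] .
  also have "\<dots> = P' * P * A" unfolding e1 using assoc_mult_mat[OF P'(1) P Ac] by simp
  also have "\<dots> = A" using Ac P' by simp
  finally have AD: "A = P' * D * Q'" by simp
  have PD: "P' * D \<in> carrier_mat 1 2" using P' Dc by simp
  have entry: "A $$ (0, j) = P' $$ (0, 0) * D $$ (0, 0) * Q' $$ (0, j)" if j: "j < 2" for j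
  proof -
    have "A $$ (0, j) = (\<Sum>l<2. (P' * D) $$ (0, l) * Q' $$ (l, j))"
      unfolding AD using j by (intro mult_entry[OF PD Q'(1)]) auto
    also have "\<dots> = (\<Sum>l<2. (P' $$ (0, 0) * D $$ (0, l)) * Q' $$ (l, j))"
      by (intro sum.cong refl) (simp add: mult_entry[OF P'(1) Dc])
    also have "\<dots> = P' $$ (0, 0) * D $$ (0, 0) * Q' $$ (0, j)"
      using D01 by (simp add: numeral_2_eq_2)
    finally show ?thesis .
  qed
  have "A $$ (0,0) = a" "A $$ (0,1) = b" by (auto simp: A_def)
  then have da: "D $$ (0,0) dvd a" and db: "D $$ (0,0) dvd b" using entry[of 0] entry[of 1] by auto
  have PA: "P * A \<in> carrier_mat 1 2" using P Ac by simp
  have "D $$ (0,0) = (\<Sum>l<2. (P * A) $$ (0, l) * Q $$ (l, 0))"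
    unfolding D_def by (intro mult_entry[OF PA Q]) auto
  also have "\<dots> = (\<Sum>l<2. (P $$ (0,0) * A $$ (0, l)) * Q $$ (l, 0))"
    by (intro sum.cong refl) (simp add: mult_entry[OF P Ac])
  also have "\<dots> = (P $$ (0,0) * Q $$ (0,0)) * a + (P $$ (0,0) * Q $$ (1,0)) * b"
    by (simp add: numeral_2_eq_2 A_def algebra_simps)
  finally show ?thesis using da db by blast
qed

lemma Lset_char:
  fixes eps phi :: "nat \<Rightarrow> 'a::idom"
  assumes enz: "\<forall>j<k. eps j \<noteq> 0" and kn: "k \<le> n" and tn: "t \<le> n"
  shows "Lset n (dmat n k eps) (dmat n t phi) =
    {L \<in> carrier_mat n n. invertible_mat L \<and> (\<forall>i<t. \<forall>j<k. phi i dvd L $$ (i, j) * eps j) \<and>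
       (\<forall>i j. t \<le> i \<and> i < n \<and> j < k \<longrightarrow> L $$ (i, j) = 0)}" (is "_ = ?R")
proof
  show "Lset n (dmat n k eps) (dmat n t phi) \<subseteq> ?R"
  proof
    fix L assume "L \<in> Lset n (dmat n k eps) (dmat n t phi)"
    then obtain S where L: "L \<in> carrier_mat n n" and Li: "invertible_mat L" and S: "S \<in> carrier_mat n n"
      and eq: "L * dmat n k eps = dmat n t phi * S" unfolding Lset_def by blast
    have e: "L $$ (i, j) * (if j < k then eps j else 0) = (if i < t then phi i else 0) * S $$ (i, j)"
      if "i < n" "j < n" for i j
      using eq mult_dmat_right[OF L that, of k eps] mult_dmat_left[OF S that, of t phi] by simp
    have 1: "\<forall>i<t. \<forall>j<k. phi i dvd L $$ (i, j) * eps j"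
    proof (intro allI impI)
      fix i j assume "i < t" "j < k"
      then have "L $$ (i, j) * eps j = phi i * S $$ (i, j)" using e[of i j] kn tn by simp
      then show "phi i dvd L $$ (i, j) * eps j" by simp
    qed
    have 2: "\<forall>i j. t \<le> i \<and> i < n \<and> j < k \<longrightarrow> L $$ (i, j) = 0"
    proof (intro allI impI)
      fix i j assume "t \<le> i \<and> i < n \<and> j < k"
      then show "L $$ (i, j) = 0" using e[of i j] kn enz by auto
    qed
    show "L \<in> ?R" using L Li 1 2 by blast
  qed
next
  show "?R \<subseteq> Lset n (dmat n k eps) (dmat n t phi)"
  proof
    fix L assume "L \<in> ?R"
    then have L: "L \<in> carrier_mat n n" and Li: "invertible_mat L"
      and 1: "\<forall>i<t. \<forall>j<k. phi i dvd L $$ (i, j) * eps j"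
      and 2: "\<forall>i j. t \<le> i \<and> i < n \<and> j < k \<longrightarrow> L $$ (i, j) = 0" by auto
    define S where "S = mat n n (\<lambda>(i, j). if i < t \<and> j < k then (SOME s. L $$ (i, j) * eps j = phi i * s) else 0)"
    have S: "S \<in> carrier_mat n n" by (simp add: S_def)
    have "L * dmat n k eps = dmat n t phi * S"
    proof (rule eq_matI)
      fix i j assume i: "i < dim_row (dmat n t phi * S)" and j: "j < dim_col (dmat n t phi * S)"
      then have i': "i < n" and j': "j < n" using S by (auto simp: dmat_def)
      show "(L * dmat n k eps) $$ (i, j) = (dmat n t phi * S) $$ (i, j)"
        unfolding mult_dmat_right[OF L i' j'] mult_dmat_left[OF S i' j']
      proof (cases "i < t \<and> j < k")
        case True
        then have "\<exists>s. L $$ (i, j) * eps j = phi i * s" using 1 by (auto simp: dvd_def)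
        then have "L $$ (i, j) * eps j = phi i * (SOME s. L $$ (i, j) * eps j = phi i * s)"
          by (rule someI_ex)
        then show "L $$ (i, j) * (if j < k then eps j else 0) = (if i < t then phi i else 0) * S $$ (i, j)"
          using True i' j' by (simp add: S_def)
      next
        case False
        then show "L $$ (i, j) * (if j < k then eps j else 0) = (if i < t then phi i else 0) * S $$ (i, j)"
          using 2 i' j' by (auto simp: S_def)
      qed
    qed (use L S in \<open>auto simp: dmat_def\<close>)
    then show "L \<in> Lset n (dmat n k eps) (dmat n t phi)" unfolding Lset_def using L Li S by blast
  qed
qed

lemma gcd_equiv:
  fixes p e l :: "'a::idom"
  assumes edd: "elementary_divisor_domain TYPE('a)" and p0: "p \<noteq> 0"
  shows "p dvd l * e \<longleftrightarrow> (\<exists>d q. is_gcd d p e \<and> p = d * q \<and> q dvd l)"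
proof
  assume h: "p dvd l * e"
  obtain d x y where dp: "d dvd p" and de: "d dvd e" and dxy: "d = x * p + y * e"
    using bezout_edd[OF edd] by blast
  have g: "is_gcd d p e" unfolding is_gcd_def using dp de dxy by auto
  obtain q where pq: "p = d * q" using dp by (auto elim: dvdE)
  obtain e' where ee: "e = d * e'" using de by (auto elim: dvdE)
  have d0: "d \<noteq> 0" using p0 pq by auto
  have "d * 1 = d * (x * q + y * e')" using dxy pq ee by (simp add: algebra_simps)
  then have one: "1 = x * q + y * e'" using d0 by (metis mult_cancel_left)
  have "d * q dvd d * (l * e')" using h pq ee by (simp add: algebra_simps)
  then have qle: "q dvd l * e'" using d0 by simp
  have "l = (l * x) * q + y * (l * e')" using one by (metis mult.commute mult.left_commute mult_1_right distrib_left)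
  moreover have "q dvd (l * x) * q + y * (l * e')" using qle by (intro dvd_add) auto
  ultimately have "q dvd l" by simp
  then show "\<exists>d q. is_gcd d p e \<and> p = d * q \<and> q dvd l" using g pq by blast
next
  assume "\<exists>d q. is_gcd d p e \<and> p = d * q \<and> q dvd l"
  then obtain d q where g: "is_gcd d p e" and pq: "p = d * q" and ql: "q dvd l" by blast
  obtain e' where ee: "e = d * e'" using g unfolding is_gcd_def by (auto elim: dvdE)
  obtain r where lr: "l = q * r" using ql by (auto elim: dvdE)
  have "l * e = p * (r * e')" using lr ee pq by (simp add: algebra_simps)
  then show "p dvd l * e" by simp
qed

theorem theorem4p1:
  fixes eps phi :: "nat \<Rightarrow> 'a::idom" and n k t :: nat
  assumes edd: "elementary_divisor_domain TYPE('a)"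
    and k: "0 < k" "k \<le> n" and t: "0 < t" "t \<le> n"
    and dE: "d_matrix (dmat n k eps)" and dPhi: "d_matrix (dmat n t phi)"
    and ek: "eps (k - 1) \<noteq> 0" and pt: "phi (t - 1) \<noteq> 0"
  shows "((k \<le> t \<and> (\<forall>i<k. phi i dvd eps i)) \<longrightarrow>
           Lset n (dmat n k eps) (dmat n t phi) =
             {L \<in> carrier_mat n n. invertible_mat L \<and>
                (\<forall>i<t. \<forall>j<k. \<exists>d q. is_gcd d (phi i) (eps j) \<and> phi i = d * q \<and> q dvd L $$ (i, j)) \<and>
                (\<forall>i j. t \<le> i \<and> i < n \<and> j < k \<longrightarrow> L $$ (i, j) = 0)}) \<and>
         (\<not> (k \<le> t \<and> (\<forall>i<k. phi i dvd eps i)) \<longrightarrow>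
           Lset n (dmat n k eps) (dmat n t phi) = {})"
proof -
  have echain: "eps i dvd eps j" if "i \<le> j" "j < k" for i j using dmat_chain[OF dE k(2) that] .
  have pchain: "phi i dvd phi j" if "i \<le> j" "j < t" for i j using dmat_chain[OF dPhi t(2) that] .
  have enz: "\<forall>j<k. eps j \<noteq> 0"
  proof (intro allI impI notI)
    fix j assume "j < k" "eps j = 0"
    then show False using echain[of j "k - 1"] ek k by auto
  qed
  have pnz: "\<forall>i<t. phi i \<noteq> 0"
  proof (intro allI impI notI)
    fix i assume "i < t" "phi i = 0"
    then show False using pchain[of i "t - 1"] pt t by auto
  qed
  note char = Lset_char[OF enz k(2) t(2), of phi]
  have P1: "Lset n (dmat n k eps) (dmat n t phi) =
             {L \<in> carrier_mat n n. invertible_mat L \<and>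
                (\<forall>i<t. \<forall>j<k. \<exists>d q. is_gcd d (phi i) (eps j) \<and> phi i = d * q \<and> q dvd L $$ (i, j)) \<and>
                (\<forall>i j. t \<le> i \<and> i < n \<and> j < k \<longrightarrow> L $$ (i, j) = 0)}"
    unfolding char using gcd_equiv[OF edd] pnz by simp
  have P2: "k \<le> t \<and> (\<forall>i<k. phi i dvd eps i)" if "L \<in> Lset n (dmat n k eps) (dmat n t phi)" for L
  proof -
    have L: "L \<in> carrier_mat n n" and Li: "invertible_mat L"
      and c1: "\<forall>i<t. \<forall>j<k. phi i dvd L $$ (i, j) * eps j"
      and c2: "\<forall>i j. t \<le> i \<and> i < n \<and> j < k \<longrightarrow> L $$ (i, j) = 0" using that unfolding char by auto
    obtain M where M: "M \<in> carrier_mat n n" "M * L = 1\<^sub>m n" using inv_carrier[OF L Li] by blast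
    have kt: "k \<le> t"
    proof (rule ccontr)
      assume "\<not> k \<le> t"
      then have "(0::'a) dvd 1"
        using c2 k by (intro key_block[OF L M(1) M(2), of t k]) auto
      then show False by simp
    qed
    have "phi i dvd eps i" if i: "i < k" for i
    proof (rule key_block[OF L M(1) M(2), of i "Suc i"])
      show "i < Suc i" "Suc i \<le> n" using i k by auto
      show "\<forall>r j. i \<le> r \<longrightarrow> r < n \<longrightarrow> j < Suc i \<longrightarrow> phi i dvd L $$ (r, j) * eps i"
      proof (intro allI impI)
        fix r j assume r: "i \<le> r" "r < n" and j: "j < Suc i"
        show "phi i dvd L $$ (r, j) * eps i"
        proof (cases "r < t")
          case True
          have "phi i dvd phi r" using pchain r True by auto
          also have "phi r dvd L $$ (r, j) * eps j" using c1 True j i by auto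
          also have "\<dots> dvd L $$ (r, j) * eps i" using echain[of j i] j i by auto
          finally show ?thesis .
        next
          case False
          then show ?thesis using c2 r j i by auto
        qed
      qed
    qed
    then show ?thesis using kt by blast
  qed
  show ?thesis
  proof (intro conjI impI)
    show "Lset n (dmat n k eps) (dmat n t phi) = {}" if "\<not> (k \<le> t \<and> (\<forall>i<k. phi i dvd eps i))"
      using P2 that by blast
  qed (rule P1)
qed

end
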